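(* Let $D_i,a_i,\lambda_i>0$ and $n_i\in[1,2]$ for $i\in\{1,2\}$. Then there exists $C>0$ such that for any $\chi_1>0$, $\chi_2>0$ and initial data satisfying (IE), $$\int_\Omega u_\varepsilon(\cdot,t)\ln(u_\varepsilon(\cdot,t)+e)+\frac{\chi_1}{\chi_2}\int_\Omega v_\varepsilon(\cdot,t)\ln(v_\varepsilon(\cdot,t)+e)\le\mathcal{F}_\varepsilon(t)+C\Big(1+\frac{\chi_1}{\chi_2}\Big)\Big\{1+\int_\Omega u_\varepsilon(\cdot,t)+\int_\Omega v_\varepsilon(\cdot,t)\Big\}$$ for all $t>0$ and $\varepsilon\in(0,1)$. Moreover, $\sup_{\varepsilon\in(0,1)}\mathcal{F}_\varepsilon(0)<\infty$.
   Context: Let $\Omega\subset\mathbb{R}$ be a bounded open interval and fix $\alpha\in(0,\frac12]$. Assumption (IE): $u_0,v_0\in W^{1,2}(\Omega)$ with $u_0>0,v_0>0$ in $\overline\Omega$; for each $\varepsilon\in(0,1)$, $u_{0\varepsilon},v_{0\varepsilon}\in C^5(\overline\Omega)$ with $u_{0\varepsilon x}=u_{0\varepsilon xxx}=v_{0\varepsilon x}=v_{0\varepsilon xxx}=0$ on $\partial\Omega$; $\frac12\inf_\Omega u_0\le u_{0\varepsilon}\le u_0+1$, $\frac12\inf_\Omega v_0\le v_{0\varepsilon}\le v_0+1$ in $\Omega$; $\int_\Omega u_{0\varepsilon x}^2\le\int_\Omega u_{0x}^2+1$, $\int_\Omega v_{0\varepsilon x}^2\le\int_\Omega v_{0x}^2+1$;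 $u_{0\varepsilon}\to u_0$, $v_{0\varepsilon}\to v_0$ a.e. as $\varepsilon\searrow0$. $(u_\varepsilon,v_\varepsilon)$ is the global positive classical solution of the approximating problem $u_t=-\varepsilon\big(\frac{u^4}{u^{4-n_1}+\varepsilon}u_{xxx}\big)_x+\varepsilon^{\alpha/2}(u^{-\alpha}u_x)_x+D_1u_{xx}-\chi_1\big(\frac{u^{5-n_1}}{u^{4-n_1}+\varepsilon}v_x\big)_x+\frac{3u^3}{3u^2+\varepsilon}(\lambda_1-u+a_1v)$, $v_t=-\varepsilon\big(\frac{v^4}{v^{4-n_2}+\varepsilon}v_{xxx}\big)_x+\varepsilon^{\alpha/2}(v^{-\alpha}v_x)_x+D_2v_{xx}+\chi_2\big(\frac{v^{5-n_2}}{v^{4-n_2}+\varepsilon}u_x\big)_x+\frac{3v^3}{3v^2+\varepsilon}(\lambda_2-v-a_2u)$ in $\Omega\times(0,\infty)$, $u_x=v_x=u_{xxx}=v_{xxx}=0$ on $\partial\Omega$, $u(\cdot,0)=u_{0\varepsilon}$, $v(\cdot,0)=v_{0\varepsilon}$ (global for $n_1,n_2\in[1,2]$). $\mathcal{F}_\varepsilon(t):=\int_\Omega u_\varepsilon\ln u_\varepsilon-\int_\Omega u_\varepsilon+\frac{\varepsilon}{(3-n_1)(4-n_1)}\int_\Omega u_\varepsilon^{-(3-n_1)}+\frac{\chi_1}{\chi_2}\Big(\int_\Omega v_\varepsilon\ln v_\varepsilon-\int_\Omega v_\varepsilon+\frac{\varepsilon}{(3-n_2)(4-n_2)}\int_\Omega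 v_\varepsilon^{-(3-n_2)}\Big)$, integrands at time $t\ge0$. *)

theory Defs
  imports "HOL-Analysis.Analysis"
begin

text \<open>The spatial domain is \<Omega> = {x0<..<x1}, closure {x0..x1}.
  Derivatives in x are taken within the closed interval (one-sided at the
  endpoints), derivatives in t at interior times.\<close>

definition dwithin :: "real \<Rightarrow> real \<Rightarrow> (real \<Rightarrow> real) \<Rightarrow> real \<Rightarrow> real" where
  "dwithin x0 x1 f = (\<lambda>x. vector_derivative f (at x within {x0..x1}))"

definition Ck_on :: "real \<Rightarrow> real \<Rightarrow> nat \<Rightarrow> (real \<Rightarrow> real) \<Rightarrow> bool" where
  "Ck_on x0 x1 k f \<longleftrightarrow>
     (\<forall>j<k. ((dwithin x0 x1 ^^ j) f) differentiable_on {x0..x1}) \<and>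
     (\<forall>j\<le>k. continuous_on {x0..x1} ((dwithin x0 x1 ^^ j) f))"

text \<open>W^{1,2}(\<Omega>) in one dimension: absolutely continuous representative
  with square integrable weak derivative g.\<close>
definition weak_deriv_W12 :: "real \<Rightarrow> real \<Rightarrow> (real \<Rightarrow> real) \<Rightarrow> (real \<Rightarrow> real) \<Rightarrow> bool" where
  "weak_deriv_W12 x0 x1 f g \<longleftrightarrow>
     g integrable_on {x0..x1} \<and> (\<lambda>x. (g x)\<^sup>2) integrable_on {x0..x1} \<and>
     (\<forall>x\<in>{x0..x1}. f x = f x0 + integral {x0..x} g)"

definition W12 :: "real \<Rightarrow> real \<Rightarrow> (real \<Rightarrow> real) \<Rightarrow> bool" where
  "W12 x0 x1 f \<longleftrightarrow> (\<exists>g. weak_deriv_W12 x0 x1 f g)"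

definition pdx :: "real \<Rightarrow> real \<Rightarrow> (real \<Rightarrow> real \<Rightarrow> real) \<Rightarrow> real \<Rightarrow> real \<Rightarrow> real" where
  "pdx x0 x1 w = (\<lambda>x t. vector_derivative (\<lambda>y. w y t) (at x within {x0..x1}))"

definition pdt :: "(real \<Rightarrow> real \<Rightarrow> real) \<Rightarrow> real \<Rightarrow> real \<Rightarrow> real" where
  "pdt w = (\<lambda>x t. vector_derivative (\<lambda>s. w x s) (at t))"

definition IE_comp :: "real \<Rightarrow> real \<Rightarrow> (real \<Rightarrow> real) \<Rightarrow> (real \<Rightarrow> real \<Rightarrow> real) \<Rightarrow> bool" where
  "IE_comp x0 x1 u0 u0e \<longleftrightarrow>
     W12 x0 x1 u0 \<and> (\<forall>x\<in>{x0..x1}. u0 x > 0) \<and>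
     (\<forall>\<epsilon>\<in>{0<..<1}.
        Ck_on x0 x1 5 (u0e \<epsilon>) \<and>
        (\<forall>x\<in>{x0,x1}. dwithin x0 x1 (u0e \<epsilon>) x = 0 \<and> (dwithin x0 x1 ^^ 3) (u0e \<epsilon>) x = 0) \<and>
        (\<forall>x\<in>{x0<..<x1}. Inf (u0 ` {x0<..<x1}) / 2 \<le> u0e \<epsilon> x \<and> u0e \<epsilon> x \<le> u0 x + 1) \<and>
        (\<exists>g. weak_deriv_W12 x0 x1 u0 g \<and>
           integral {x0..x1} (\<lambda>x. (dwithin x0 x1 (u0e \<epsilon>) x)\<^sup>2) \<le> integral {x0..x1} (\<lambda>x. (g x)\<^sup>2) + 1)) \<and>
     (AE x in lborel. x \<in> {x0<..<x1} \<longrightarrow> ((\<lambda>\<epsilon>. u0e \<epsilon> x) \<longlongrightarrow> u0 x) (at_right 0))"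

text \<open>Here w is the own component, z the other one; sg = -1 for the u-equation
  (term -chi1(...)_x) and +1 for the v-equation (term +chi2(...)_x); the reaction
  is 3w^3/(3w^2+\<epsilon>) (\<lambda> - w + c z) with c = a1 resp. c = -a2.\<close>
definition flux4 :: "real \<Rightarrow> real \<Rightarrow> real \<Rightarrow> real \<Rightarrow> (real \<Rightarrow> real \<Rightarrow> real) \<Rightarrow> real \<Rightarrow> real \<Rightarrow> real" where
  "flux4 x0 x1 n \<epsilon> w = (\<lambda>x t. (w x t)^4 / ((w x t) powr (4 - n) + \<epsilon>) * (pdx x0 x1 ^^ 3) w x t)"

definition fluxa :: "real \<Rightarrow> real \<Rightarrow> real \<Rightarrow> (real \<Rightarrow> real \<Rightarrow> real) \<Rightarrow> real \<Rightarrow> real \<Rightarrow> real" where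
  "fluxa x0 x1 \<alpha> w = (\<lambda>x t. (w x t) powr (-\<alpha>) * pdx x0 x1 w x t)"

definition fluxc :: "real \<Rightarrow> real \<Rightarrow> real \<Rightarrow> real \<Rightarrow> (real \<Rightarrow> real \<Rightarrow> real) \<Rightarrow> (real \<Rightarrow> real \<Rightarrow> real) \<Rightarrow> real \<Rightarrow> real \<Rightarrow> real" where
  "fluxc x0 x1 n \<epsilon> w z = (\<lambda>x t. (w x t) powr (5 - n) / ((w x t) powr (4 - n) + \<epsilon>) * pdx x0 x1 z x t)"

definition approx_rhs ::
  "real \<Rightarrow> real \<Rightarrow> real \<Rightarrow> real \<Rightarrow> real \<Rightarrow> real \<Rightarrow> real \<Rightarrow> real \<Rightarrow> real \<Rightarrow> real \<Rightarrow>
   (real \<Rightarrow> real \<Rightarrow> real) \<Rightarrow> (real \<Rightarrow> real \<Rightarrow> real) \<Rightarrow> real \<Rightarrow> real \<Rightarrow> real" where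
  "approx_rhs x0 x1 \<alpha> \<epsilon> n D sg chi lam c w z = (\<lambda>x t.
      - \<epsilon> * pdx x0 x1 (flux4 x0 x1 n \<epsilon> w) x t
      + \<epsilon> powr (\<alpha> / 2) * pdx x0 x1 (fluxa x0 x1 \<alpha> w) x t
      + D * (pdx x0 x1 ^^ 2) w x t
      + sg * chi * pdx x0 x1 (fluxc x0 x1 n \<epsilon> w z) x t
      + 3 * (w x t)^3 / (3 * (w x t)^2 + \<epsilon>) * (lam - w x t + c * z x t))"

definition classical_reg :: "real \<Rightarrow> real \<Rightarrow> real \<Rightarrow> real \<Rightarrow> real \<Rightarrow> (real \<Rightarrow> real \<Rightarrow> real) \<Rightarrow> (real \<Rightarrow> real \<Rightarrow> real) \<Rightarrow> bool" where
  "classical_reg x0 x1 \<alpha> \<epsilon> n w z \<longleftrightarrow>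
     (\<forall>t>0. \<forall>x\<in>{x0..x1}.
        (\<forall>k<4. (\<lambda>y. (pdx x0 x1 ^^ k) w y t) differentiable (at x within {x0..x1})) \<and>
        (\<lambda>y. flux4 x0 x1 n \<epsilon> w y t) differentiable (at x within {x0..x1}) \<and>
        (\<lambda>y. fluxa x0 x1 \<alpha> w y t) differentiable (at x within {x0..x1}) \<and>
        (\<lambda>y. fluxc x0 x1 n \<epsilon> w z y t) differentiable (at x within {x0..x1}) \<and>
        (\<lambda>s. w x s) differentiable (at t))"

definition approx_solution ::
  "real \<Rightarrow> real \<Rightarrow> real \<Rightarrow> real \<Rightarrow> real \<Rightarrow> real \<Rightarrow> real \<Rightarrow> real \<Rightarrow> real \<Rightarrow> real \<Rightarrow> real \<Rightarrow> real \<Rightarrow> real \<Rightarrow> real \<Rightarrow>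
   (real \<Rightarrow> real) \<Rightarrow> (real \<Rightarrow> real) \<Rightarrow> (real \<Rightarrow> real \<Rightarrow> real) \<Rightarrow> (real \<Rightarrow> real \<Rightarrow> real) \<Rightarrow> bool" where
  "approx_solution x0 x1 \<alpha> n1 n2 D1 D2 chi1 chi2 lam1 lam2 a1 a2 \<epsilon> u0e v0e u v \<longleftrightarrow>
     continuous_on ({x0..x1} \<times> {0..}) (\<lambda>(x,t). u x t) \<and>
     continuous_on ({x0..x1} \<times> {0..}) (\<lambda>(x,t). v x t) \<and>
     (\<forall>x\<in>{x0..x1}. \<forall>t\<ge>0. u x t > 0 \<and> v x t > 0) \<and>
     classical_reg x0 x1 \<alpha> \<epsilon> n1 u v \<and> classical_reg x0 x1 \<alpha> \<epsilon> n2 v u \<and>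
     (\<forall>t>0. \<forall>x\<in>{x0<..<x1}.
        pdt u x t = approx_rhs x0 x1 \<alpha> \<epsilon> n1 D1 (-1) chi1 lam1 a1 u v x t \<and>
        pdt v x t = approx_rhs x0 x1 \<alpha> \<epsilon> n2 D2 1 chi2 lam2 (-a2) v u x t) \<and>
     (\<forall>t>0. \<forall>x\<in>{x0,x1}.
        pdx x0 x1 u x t = 0 \<and> pdx x0 x1 v x t = 0 \<and>
        (pdx x0 x1 ^^ 3) u x t = 0 \<and> (pdx x0 x1 ^^ 3) v x t = 0) \<and>
     (\<forall>x\<in>{x0..x1}. u x 0 = u0e x \<and> v x 0 = v0e x)"

definition Fe :: "real \<Rightarrow> real \<Rightarrow> real \<Rightarrow> real \<Rightarrow> real \<Rightarrow> real \<Rightarrow> real \<Rightarrow>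
    (real \<Rightarrow> real \<Rightarrow> real) \<Rightarrow> (real \<Rightarrow> real \<Rightarrow> real) \<Rightarrow> real \<Rightarrow> real" where
  "Fe x0 x1 n1 n2 chi1 chi2 \<epsilon> u v t =
     integral {x0..x1} (\<lambda>x. u x t * ln (u x t)) - integral {x0..x1} (\<lambda>x. u x t)
     + \<epsilon> / ((3 - n1) * (4 - n1)) * integral {x0..x1} (\<lambda>x. (u x t) powr (-(3 - n1)))
     + chi1 / chi2 * (integral {x0..x1} (\<lambda>x. v x t * ln (v x t)) - integral {x0..x1} (\<lambda>x. v x t)
     + \<epsilon> / ((3 - n2) * (4 - n2)) * integral {x0..x1} (\<lambda>x. (v x t) powr (-(3 - n2))))"

end

theory Submission
  imports Defs
begin

lemma pt_bound:
  fixes y :: real assumes "y > 0"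
  shows "y * ln (y + exp 1) \<le> y * ln y + exp 1"
proof -
  have e: "y + exp 1 > 0" using assms exp_gt_zero[of 1] by linarith
  have "ln (y + exp 1) - ln y = ln ((y + exp 1) / y)" using assms e by (simp add: ln_div)
  also have "\<dots> \<le> (y + exp 1)/y - 1" by (rule ln_le_minus_one) (use assms e in auto)
  also have "\<dots> = exp 1 / y" using assms by (simp add: field_simps)
  finally have "y * (ln (y + exp 1) - ln y) \<le> y * (exp 1 / y)" using assms
    by (intro mult_left_mono) auto
  thus ?thesis using assms by (simp add: algebra_simps)
qed

lemma int_bound:
  fixes f :: "real \<Rightarrow> real" and a b c p :: real
  assumes ab: "a \<le> b" and cf: "continuous_on {a..b} f" and pos: "\<And>x. x \<in> {a..b} \<Longrightarrow> f x > 0"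
    and c: "c \<ge> 0"
  shows "integral {a..b} (\<lambda>x. f x * ln (f x + exp 1)) \<le>
     integral {a..b} (\<lambda>x. f x * ln (f x)) - integral {a..b} f + c * integral {a..b} (\<lambda>x. f x powr p)
     + (exp 1 * (b - a) + integral {a..b} f)"
proof -
  have i1: "(\<lambda>x. f x * ln (f x + exp 1)) integrable_on {a..b}"
    by (rule integrable_continuous_real) (use pos exp_gt_zero[of 1] in \<open>auto intro!: continuous_intros cf simp: add_pos_pos\<close>, smt (verit) exp_gt_zero)
  have i2: "(\<lambda>x. f x * ln (f x)) integrable_on {a..b}"
    by (rule integrable_continuous_real) (use pos in \<open>auto intro!: continuous_intros cf\<close>, force)
  have i3: "f integrable_on {a..b}" by (rule integrable_continuous_real) (rule cf)
  have i4: "(\<lambda>x. f x powr p) integrable_on {a..b}"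
    by (rule integrable_continuous_real) (use pos in \<open>auto intro!: continuous_intros cf\<close>, force)
  have n4: "integral {a..b} (\<lambda>x. f x powr p) \<ge> 0" by (rule integral_nonneg[OF i4]) auto
  have "integral {a..b} (\<lambda>x. f x * ln (f x + exp 1)) \<le> integral {a..b} (\<lambda>x. f x * ln (f x) + exp 1)"
    by (rule integral_le[OF i1]) (use i2 pt_bound pos in \<open>auto intro!: integrable_add\<close>)
  also have "\<dots> = integral {a..b} (\<lambda>x. f x * ln (f x)) + exp 1 * (b - a)"
    using i2 ab by (subst integral_add) (auto simp: mult.commute)
  finally show ?thesis using n4 c by (smt (verit) mult_nonneg_nonneg)
qed

lemma init_bound:
  fixes f :: "real \<Rightarrow> real" and a b m M eps k q :: real
  assumes ab: "a < b" and cf: "continuous_on {a..b} f" and pos: "\<And>x. x \<in> {a..b} \<Longrightarrow> f x > 0"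
    and bd: "\<And>x. x \<in> {a<..<b} \<Longrightarrow> m \<le> f x \<and> f x \<le> M" and m: "m > 0"
    and e: "0 < eps" "eps < 1" and k: "k > 0" and q: "q \<ge> 0"
  shows "integral {a..b} (\<lambda>x. f x * ln (f x)) - integral {a..b} f
     + eps / k * integral {a..b} (\<lambda>x. f x powr (-q)) \<le> M^2 * (b - a) + 1 / k * m powr (-q) * (b - a)"
proof -
  have i2: "(\<lambda>x. f x * ln (f x)) integrable_on {a..b}"
    by (rule integrable_continuous_real) (use pos in \<open>auto intro!: continuous_intros cf\<close>, force)
  have i3: "f integrable_on {a..b}" by (rule integrable_continuous_real) (rule cf)
  have i4: "(\<lambda>x. f x powr (-q)) integrable_on {a..b}"
    by (rule integrable_continuous_real) (use pos in \<open>auto intro!: continuous_intros cf\<close>, force)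
  have n3: "integral {a..b} f \<ge> 0" by (rule integral_nonneg[OF i3]) (use pos in force)
  have n4: "integral {a..b} (\<lambda>x. f x powr (-q)) \<ge> 0" by (rule integral_nonneg[OF i4]) auto
  have "integral {a..b} (\<lambda>x. f x * ln (f x)) \<le> integral {a..b} (\<lambda>x. M^2)"
  proof -
    have "integral {a<..<b} (\<lambda>x. f x * ln (f x)) \<le> integral {a<..<b} (\<lambda>x. M^2)"
    proof (rule integral_le)
      show "(\<lambda>x. f x * ln (f x)) integrable_on {a<..<b}" using i2 integrable_on_open_interval_real by blast
      show "(\<lambda>x. M^2) integrable_on {a<..<b}" using integrable_on_open_interval_real by blast
      fix x assume x: "x \<in> {a<..<b}"
      have fx: "f x > 0" "m \<le> f x" "f x \<le> M" using pos[of x] bd[OF x] x by auto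
      have "ln (f x) \<le> f x - 1" using fx by (intro ln_le_minus_one) auto
      hence "f x * ln (f x) \<le> f x * (f x - 1)" using fx by (intro mult_left_mono) auto
      also have "\<dots> \<le> f x * f x" using fx by (simp add: algebra_simps)
      also have "\<dots> \<le> M * M" using fx by (intro mult_mono) auto
      also have "\<dots> = M^2" by (simp add: power2_eq_square)
      finally show "f x * ln (f x) \<le> M^2" .
    qed
    thus ?thesis by (simp only: integral_open_interval_real)
  qed
  also have "\<dots> = M^2 * (b - a)" using ab by simp
  finally have A: "integral {a..b} (\<lambda>x. f x * ln (f x)) \<le> M^2 * (b - a)" .
  have "integral {a..b} (\<lambda>x. f x powr (-q)) \<le> integral {a..b} (\<lambda>x. m powr (-q))"
  proof -
    have "integral {a<..<b} (\<lambda>x. f x powr (-q)) \<le> integral {a<..<b} (\<lambda>x. m powr (-q))"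
    proof (rule integral_le)
      show "(\<lambda>x. f x powr (-q)) integrable_on {a<..<b}" using i4 integrable_on_open_interval_real by blast
      show "(\<lambda>x. m powr (-q)) integrable_on {a<..<b}" using integrable_on_open_interval_real by blast
      fix x assume x: "x \<in> {a<..<b}"
      show "f x powr (-q) \<le> m powr (-q)" using bd[OF x] m q by (intro powr_mono2') auto
    qed
    thus ?thesis by (simp only: integral_open_interval_real)
  qed
  also have "\<dots> = m powr (-q) * (b - a)" using ab by simp
  finally have B: "integral {a..b} (\<lambda>x. f x powr (-q)) \<le> m powr (-q) * (b - a)" .
  have "eps / k * integral {a..b} (\<lambda>x. f x powr (-q)) \<le> 1 / k * integral {a..b} (\<lambda>x. f x powr (-q))"
    using e k n4 by (intro mult_right_mono) (auto simp: divide_simps)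
  also have "\<dots> \<le> 1 / k * (m powr (-q) * (b - a))" using B k by (intro mult_left_mono) auto
  finally show ?thesis using A n3 by simp
qed

lemma IE_bounds:
  assumes ab: "x0 < x1" and ie: "IE_comp x0 x1 u0 u0e"
  shows "\<exists>m M. m > 0 \<and> (\<forall>\<epsilon>\<in>{0<..<1}. \<forall>x\<in>{x0<..<x1}. m \<le> u0e \<epsilon> x \<and> u0e \<epsilon> x \<le> M)"
proof -
  have ie1: "W12 x0 x1 u0" and ie2: "\<forall>x\<in>{x0..x1}. u0 x > 0"
    and ie3: "\<forall>\<epsilon>\<in>{0<..<1}. \<forall>x\<in>{x0<..<x1}. Inf (u0 ` {x0<..<x1}) / 2 \<le> u0e \<epsilon> x \<and> u0e \<epsilon> x \<le> u0 x + 1"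
  proof -
    note I = ie[unfolded IE_comp_def]
    show "W12 x0 x1 u0" using I by (rule conjunct1)
    show "\<forall>x\<in>{x0..x1}. u0 x > 0" using I[THEN conjunct2] by (rule conjunct1)
    note I3 = I[THEN conjunct2, THEN conjunct2, THEN conjunct1]
    show "\<forall>\<epsilon>\<in>{0<..<1}. \<forall>x\<in>{x0<..<x1}. Inf (u0 ` {x0<..<x1}) / 2 \<le> u0e \<epsilon> x \<and> u0e \<epsilon> x \<le> u0 x + 1"
    proof (intro ballI)
      fix \<epsilon> :: real and x assume e: "\<epsilon> \<in> {0<..<1}" and x: "x \<in> {x0<..<x1}"
      have "\<forall>x\<in>{x0<..<x1}. Inf (u0 ` {x0<..<x1}) / 2 \<le> u0e \<epsilon> x \<and> u0e \<epsilon> x \<le> u0 x + 1"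
        using bspec[OF I3 e] by (elim conjE)
      thus "Inf (u0 ` {x0<..<x1}) / 2 \<le> u0e \<epsilon> x \<and> u0e \<epsilon> x \<le> u0 x + 1" using x by (rule bspec)
    qed
  qed
  obtain g where g: "weak_deriv_W12 x0 x1 u0 g" using ie1 unfolding W12_def by (rule exE)
  have gi: "g integrable_on {x0..x1}" and ge: "\<forall>x\<in>{x0..x1}. u0 x = u0 x0 + integral {x0..x} g"
    using g[unfolded weak_deriv_W12_def, THEN conjunct1] g[unfolded weak_deriv_W12_def, THEN conjunct2, THEN conjunct2] by this+
  have "continuous_on {x0..x1} (\<lambda>x. u0 x0 + integral {x0..x} g)"
    by (rule continuous_on_add[OF continuous_on_const indefinite_integral_continuous_1[OF gi]])
  hence cu: "continuous_on {x0..x1} u0"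
    by (rule continuous_on_eq) (rule sym[OF bspec[OF ge]], assumption)
  obtain xm where xm: "xm \<in> {x0..x1}" "\<forall>y\<in>{x0..x1}. u0 xm \<le> u0 y"
    using continuous_attains_inf[OF compact_Icc _ cu] ab by auto
  obtain xM where xM: "xM \<in> {x0..x1}" "\<forall>y\<in>{x0..x1}. u0 y \<le> u0 xM"
    using continuous_attains_sup[OF compact_Icc _ cu] ab by auto
  have p: "u0 xm > 0" using ie2 xm(1) by blast
  have I: "Inf (u0 ` {x0<..<x1}) \<ge> u0 xm"
    by (rule cInf_greatest) (use ab xm in auto)
  note H = ie3
  have "\<forall>\<epsilon>\<in>{0<..<1}. \<forall>x\<in>{x0<..<x1}. u0 xm / 2 \<le> u0e \<epsilon> x \<and> u0e \<epsilon> x \<le> u0 xM + 1"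
  proof (intro ballI)
    fix \<epsilon> x assume e: "\<epsilon> \<in> {0<..<1::real}" and x: "x \<in> {x0<..<x1}"
    have "x \<in> {x0..x1}" using x by auto
    hence "u0 x \<le> u0 xM" using xM(2) by blast
    thus "u0 xm / 2 \<le> u0e \<epsilon> x \<and> u0e \<epsilon> x \<le> u0 xM + 1" using bspec[OF bspec[OF H e] x] I by linarith
  qed
  thus ?thesis using p by (intro exI[of _ "u0 xm / 2"] exI[of _ "u0 xM + 1"]) auto
qed


lemma cont_slice:
  fixes w :: "real \<Rightarrow> real \<Rightarrow> real"
  assumes "continuous_on (A \<times> {0..}) (\<lambda>(x,t). w x t)" and "t \<ge> 0"
  shows "continuous_on A (\<lambda>x. w x t)"
proof -
  have "continuous_on A ((\<lambda>(x,t). w x t) \<circ> (\<lambda>x. (x,t)))"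
    by (rule continuous_on_compose) (auto intro!: continuous_intros continuous_on_subset[OF assms(1)] simp: assms(2))
  thus ?thesis by (simp add: o_def)
qed

lemma arith_comb:
  fixes K Iu Iv r Lu Lv Fu Fv :: real
  assumes "K \<ge> 0" "Iu \<ge> 0" "Iv \<ge> 0" "r > 0"
    and "Lu \<le> Fu + (K + Iu)" and "Lv \<le> Fv + (K + Iv)"
  shows "Lu + r * Lv \<le> Fu + r * Fv + (K + 1) * (1 + r) * (1 + Iu + Iv)"
proof -
  have a: "r * Lv \<le> r * (Fv + (K + Iv))" using assms by (intro mult_left_mono) auto
  have b: "K + Iu \<le> (K + 1) * (1 + Iu + Iv)"
  proof -
    have "(K + 1) * (1 + Iu + Iv) = K + 1 + (K * (Iu + Iv) + (Iu + Iv))" by (simp add: algebra_simps)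
    moreover have "K * (Iu + Iv) \<ge> 0" using assms by simp
    ultimately show ?thesis using assms by linarith
  qed
  have c: "K + Iv \<le> (K + 1) * (1 + Iu + Iv)"
  proof -
    have "(K + 1) * (1 + Iu + Iv) = K + 1 + (K * (Iu + Iv) + (Iu + Iv))" by (simp add: algebra_simps)
    moreover have "K * (Iu + Iv) \<ge> 0" using assms by simp
    ultimately show ?thesis using assms by linarith
  qed
  have d: "r * (K + Iv) \<le> r * ((K + 1) * (1 + Iu + Iv))" using c assms by (intro mult_left_mono) auto
  have "(K + 1) * (1 + r) * (1 + Iu + Iv) = (K + 1) * (1 + Iu + Iv) + r * ((K + 1) * (1 + Iu + Iv))"
    by (simp add: algebra_simps)
  thus ?thesis using a b d assms(5) by (simp add: algebra_simps)
qed

theorem lemma3p3: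
  fixes x0 x1 \<alpha> D1 D2 a1 a2 lam1 lam2 n1 n2 :: real
  assumes "x0 < x1"
    and "0 < \<alpha>" and "\<alpha> \<le> 1/2"
    and "D1 > 0" and "D2 > 0" and "a1 > 0" and "a2 > 0" and "lam1 > 0" and "lam2 > 0"
    and "1 \<le> n1" and "n1 \<le> 2" and "1 \<le> n2" and "n2 \<le> 2"
  shows "\<exists>C>0. \<forall>chi1 chi2 u0 v0 u0e v0e u v.
     chi1 > 0 \<longrightarrow> chi2 > 0 \<longrightarrow>
     IE_comp x0 x1 u0 u0e \<longrightarrow> IE_comp x0 x1 v0 v0e \<longrightarrow>
     (\<forall>\<epsilon>\<in>{0<..<1}. approx_solution x0 x1 \<alpha> n1 n2 D1 D2 chi1 chi2 lam1 lam2 a1 a2 \<epsilon>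
                        (u0e \<epsilon>) (v0e \<epsilon>) (u \<epsilon>) (v \<epsilon>)) \<longrightarrow>
     (\<forall>t>0. \<forall>\<epsilon>\<in>{0<..<1}.
        integral {x0..x1} (\<lambda>x. u \<epsilon> x t * ln (u \<epsilon> x t + exp 1))
        + chi1 / chi2 * integral {x0..x1} (\<lambda>x. v \<epsilon> x t * ln (v \<epsilon> x t + exp 1))
        \<le> Fe x0 x1 n1 n2 chi1 chi2 \<epsilon> (u \<epsilon>) (v \<epsilon>) t
           + C * (1 + chi1 / chi2) * (1 + integral {x0..x1} (\<lambda>x. u \<epsilon> x t)
                                      + integral {x0..x1} (\<lambda>x. v \<epsilon> x t))) \<and>
     bdd_above ((\<lambda>\<epsilon>. Fe x0 x1 n1 n2 chi1 chi2 \<epsilon> (u \<epsilon>) (v \<epsilon>) 0) ` {0<..<1})"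
proof -
  define C where "C = exp 1 * (x1 - x0) + 1"
  have K0: "exp 1 * (x1 - x0) \<ge> 0" using assms(1) by simp
  have Cpos: "C > 0" using K0 unfolding C_def by linarith
  have k1: "(3 - n1) * (4 - n1) > 0" using assms by simp
  have k2: "(3 - n2) * (4 - n2) > 0" using assms by simp
  show ?thesis
  proof (rule exI[of _ C], rule conjI[OF Cpos], (rule allI)+, (rule impI)+, rule conjI)
    fix chi1 chi2 :: real and u0 v0 :: "real \<Rightarrow> real" and u0e v0e :: "real \<Rightarrow> real \<Rightarrow> real"
      and u v :: "real \<Rightarrow> real \<Rightarrow> real \<Rightarrow> real"
    assume c1: "chi1 > 0" and c2: "chi2 > 0" and ieu: "IE_comp x0 x1 u0 u0e" and iev: "IE_comp x0 x1 v0 v0e"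
      and sol: "\<forall>\<epsilon>\<in>{0<..<1}. approx_solution x0 x1 \<alpha> n1 n2 D1 D2 chi1 chi2 lam1 lam2 a1 a2 \<epsilon>
                        (u0e \<epsilon>) (v0e \<epsilon>) (u \<epsilon>) (v \<epsilon>)"
    have r: "chi1 / chi2 > 0" using c1 c2 by simp
    {
      fix \<epsilon> :: real assume e: "\<epsilon> \<in> {0<..<1}"
      note S = bspec[OF sol e, unfolded approx_solution_def]
      have "continuous_on ({x0..x1} \<times> {0..}) (\<lambda>(x,t). u \<epsilon> x t)" using S by (rule conjunct1)
      moreover have "continuous_on ({x0..x1} \<times> {0..}) (\<lambda>(x,t). v \<epsilon> x t)" using S[THEN conjunct2] by (rule conjunct1)
      moreover have "\<forall>x\<in>{x0..x1}. \<forall>t\<ge>0. u \<epsilon> x t > 0 \<and> v \<epsilon> x t > 0"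
        using S[THEN conjunct2, THEN conjunct2] by (rule conjunct1)
      moreover have "\<forall>x\<in>{x0..x1}. u \<epsilon> x 0 = u0e \<epsilon> x \<and> v \<epsilon> x 0 = v0e \<epsilon> x"
        using S[THEN conjunct2, THEN conjunct2, THEN conjunct2, THEN conjunct2, THEN conjunct2,
            THEN conjunct2, THEN conjunct2] .
      ultimately have "continuous_on ({x0..x1} \<times> {0..}) (\<lambda>(x,t). u \<epsilon> x t) \<and>
          continuous_on ({x0..x1} \<times> {0..}) (\<lambda>(x,t). v \<epsilon> x t) \<and>
          (\<forall>x\<in>{x0..x1}. \<forall>t\<ge>0. u \<epsilon> x t > 0 \<and> v \<epsilon> x t > 0) \<and>
          (\<forall>x\<in>{x0..x1}. u \<epsilon> x 0 = u0e \<epsilon> x \<and> v \<epsilon> x 0 = v0e \<epsilon> x)" by (intro conjI)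
    } note SS = this
    show "\<forall>t>0. \<forall>\<epsilon>\<in>{0<..<1}.
        integral {x0..x1} (\<lambda>x. u \<epsilon> x t * ln (u \<epsilon> x t + exp 1))
        + chi1 / chi2 * integral {x0..x1} (\<lambda>x. v \<epsilon> x t * ln (v \<epsilon> x t + exp 1))
        \<le> Fe x0 x1 n1 n2 chi1 chi2 \<epsilon> (u \<epsilon>) (v \<epsilon>) t
           + C * (1 + chi1 / chi2) * (1 + integral {x0..x1} (\<lambda>x. u \<epsilon> x t)
                                      + integral {x0..x1} (\<lambda>x. v \<epsilon> x t))"
    proof (intro allI impI ballI)
      fix t \<epsilon> :: real assume t: "t > 0" and e: "\<epsilon> \<in> {0<..<1}"
      note T = SS[OF e]
      have cu: "continuous_on {x0..x1} (\<lambda>x. u \<epsilon> x t)" using cont_slice[OF T[THEN conjunct1]] t by simp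
      have cv: "continuous_on {x0..x1} (\<lambda>x. v \<epsilon> x t)" using cont_slice[OF T[THEN conjunct2, THEN conjunct1]] t by simp
      have pu: "\<And>x. x \<in> {x0..x1} \<Longrightarrow> u \<epsilon> x t > 0" using T[THEN conjunct2, THEN conjunct2, THEN conjunct1] t by simp
      have pv: "\<And>x. x \<in> {x0..x1} \<Longrightarrow> v \<epsilon> x t > 0" using T[THEN conjunct2, THEN conjunct2, THEN conjunct1] t by simp
      have e0: "\<epsilon> / ((3 - n1) * (4 - n1)) \<ge> 0" "\<epsilon> / ((3 - n2) * (4 - n2)) \<ge> 0" using e k1 k2 by auto
      have Lu: "integral {x0..x1} (\<lambda>x. u \<epsilon> x t * ln (u \<epsilon> x t + exp 1)) \<le>
         (integral {x0..x1} (\<lambda>x. u \<epsilon> x t * ln (u \<epsilon> x t)) - integral {x0..x1} (\<lambda>x. u \<epsilon> x t)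
          + \<epsilon> / ((3 - n1) * (4 - n1)) * integral {x0..x1} (\<lambda>x. (u \<epsilon> x t) powr (-(3 - n1))))
         + (exp 1 * (x1 - x0) + integral {x0..x1} (\<lambda>x. u \<epsilon> x t))"
        using int_bound[of x0 x1 "\<lambda>x. u \<epsilon> x t", OF _ cu pu e0(1)] assms(1) by simp
      have Lv: "integral {x0..x1} (\<lambda>x. v \<epsilon> x t * ln (v \<epsilon> x t + exp 1)) \<le>
         (integral {x0..x1} (\<lambda>x. v \<epsilon> x t * ln (v \<epsilon> x t)) - integral {x0..x1} (\<lambda>x. v \<epsilon> x t)
          + \<epsilon> / ((3 - n2) * (4 - n2)) * integral {x0..x1} (\<lambda>x. (v \<epsilon> x t) powr (-(3 - n2))))
         + (exp 1 * (x1 - x0) + integral {x0..x1} (\<lambda>x. v \<epsilon> x t))"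
        using int_bound[of x0 x1 "\<lambda>x. v \<epsilon> x t", OF _ cv pv e0(2)] assms(1) by simp
      have Iu: "integral {x0..x1} (\<lambda>x. u \<epsilon> x t) \<ge> 0"
        by (rule integral_nonneg[OF integrable_continuous_real[OF cu]]) (use pu in force)
      have Iv: "integral {x0..x1} (\<lambda>x. v \<epsilon> x t) \<ge> 0"
        by (rule integral_nonneg[OF integrable_continuous_real[OF cv]]) (use pv in force)
      show "integral {x0..x1} (\<lambda>x. u \<epsilon> x t * ln (u \<epsilon> x t + exp 1))
        + chi1 / chi2 * integral {x0..x1} (\<lambda>x. v \<epsilon> x t * ln (v \<epsilon> x t + exp 1))
        \<le> Fe x0 x1 n1 n2 chi1 chi2 \<epsilon> (u \<epsilon>) (v \<epsilon>) t
           + C * (1 + chi1 / chi2) * (1 + integral {x0..x1} (\<lambda>x. u \<epsilon> x t)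
                                      + integral {x0..x1} (\<lambda>x. v \<epsilon> x t))"
        unfolding Fe_def C_def by (rule arith_comb[OF K0 Iu Iv r Lu Lv])
    qed
    obtain mu Mu where mu: "mu > 0" and bu: "\<forall>\<epsilon>\<in>{0<..<1}. \<forall>x\<in>{x0<..<x1}. mu \<le> u0e \<epsilon> x \<and> u0e \<epsilon> x \<le> Mu"
      using IE_bounds[OF assms(1) ieu] by (elim exE conjE)
    obtain mv Mv where mv: "mv > 0" and bv: "\<forall>\<epsilon>\<in>{0<..<1}. \<forall>x\<in>{x0<..<x1}. mv \<le> v0e \<epsilon> x \<and> v0e \<epsilon> x \<le> Mv"
      using IE_bounds[OF assms(1) iev] by (elim exE conjE)
    show "bdd_above ((\<lambda>\<epsilon>. Fe x0 x1 n1 n2 chi1 chi2 \<epsilon> (u \<epsilon>) (v \<epsilon>) 0) ` {0<..<1})"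
    proof (rule bdd_aboveI2)
      fix \<epsilon> :: real assume e: "\<epsilon> \<in> {0<..<1}"
      note T = SS[OF e]
      have cu: "continuous_on {x0..x1} (\<lambda>x. u \<epsilon> x 0)" using cont_slice[OF T[THEN conjunct1]] by simp
      have cv: "continuous_on {x0..x1} (\<lambda>x. v \<epsilon> x 0)" using cont_slice[OF T[THEN conjunct2, THEN conjunct1]] by simp
      have pu: "\<And>x. x \<in> {x0..x1} \<Longrightarrow> u \<epsilon> x 0 > 0" using T[THEN conjunct2, THEN conjunct2, THEN conjunct1] by simp
      have pv: "\<And>x. x \<in> {x0..x1} \<Longrightarrow> v \<epsilon> x 0 > 0" using T[THEN conjunct2, THEN conjunct2, THEN conjunct1] by simp
      have iv: "\<forall>x\<in>{x0..x1}. u \<epsilon> x 0 = u0e \<epsilon> x \<and> v \<epsilon> x 0 = v0e \<epsilon> x"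
        using T[THEN conjunct2, THEN conjunct2, THEN conjunct2] .
      have bu': "\<And>x. x \<in> {x0<..<x1} \<Longrightarrow> mu \<le> u \<epsilon> x 0 \<and> u \<epsilon> x 0 \<le> Mu"
      proof -
        fix x assume x: "x \<in> {x0<..<x1}"
        have "x \<in> {x0..x1}" using x by simp
        hence "u \<epsilon> x 0 = u0e \<epsilon> x" using iv by blast
        thus "mu \<le> u \<epsilon> x 0 \<and> u \<epsilon> x 0 \<le> Mu" using bspec[OF bspec[OF bu e] x] by simp
      qed
      have bv': "\<And>x. x \<in> {x0<..<x1} \<Longrightarrow> mv \<le> v \<epsilon> x 0 \<and> v \<epsilon> x 0 \<le> Mv"
      proof -
        fix x assume x: "x \<in> {x0<..<x1}"
        have "x \<in> {x0..x1}" using x by simp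
        hence "v \<epsilon> x 0 = v0e \<epsilon> x" using iv by blast
        thus "mv \<le> v \<epsilon> x 0 \<and> v \<epsilon> x 0 \<le> Mv" using bspec[OF bspec[OF bv e] x] by simp
      qed
      have e1: "0 < \<epsilon>" "\<epsilon> < 1" using e by auto
      have q1: "3 - n1 \<ge> 0" and q2: "3 - n2 \<ge> 0" using assms by auto
      have A: "integral {x0..x1} (\<lambda>x. u \<epsilon> x 0 * ln (u \<epsilon> x 0)) - integral {x0..x1} (\<lambda>x. u \<epsilon> x 0)
         + \<epsilon> / ((3 - n1) * (4 - n1)) * integral {x0..x1} (\<lambda>x. (u \<epsilon> x 0) powr (-(3 - n1)))
         \<le> Mu^2 * (x1 - x0) + 1 / ((3 - n1) * (4 - n1)) * mu powr (-(3 - n1)) * (x1 - x0)"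
        by (rule init_bound[OF assms(1) cu pu bu' mu e1 k1 q1])
      have B: "integral {x0..x1} (\<lambda>x. v \<epsilon> x 0 * ln (v \<epsilon> x 0)) - integral {x0..x1} (\<lambda>x. v \<epsilon> x 0)
         + \<epsilon> / ((3 - n2) * (4 - n2)) * integral {x0..x1} (\<lambda>x. (v \<epsilon> x 0) powr (-(3 - n2)))
         \<le> Mv^2 * (x1 - x0) + 1 / ((3 - n2) * (4 - n2)) * mv powr (-(3 - n2)) * (x1 - x0)"
        by (rule init_bound[OF assms(1) cv pv bv' mv e1 k2 q2])
      have B': "chi1 / chi2 * (integral {x0..x1} (\<lambda>x. v \<epsilon> x 0 * ln (v \<epsilon> x 0)) - integral {x0..x1} (\<lambda>x. v \<epsilon> x 0)
         + \<epsilon> / ((3 - n2) * (4 - n2)) * integral {x0..x1} (\<lambda>x. (v \<epsilon> x 0) powr (-(3 - n2))))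
         \<le> chi1 / chi2 * (Mv^2 * (x1 - x0) + 1 / ((3 - n2) * (4 - n2)) * mv powr (-(3 - n2)) * (x1 - x0))"
        using B r by (intro mult_left_mono) auto
      show "Fe x0 x1 n1 n2 chi1 chi2 \<epsilon> (u \<epsilon>) (v \<epsilon>) 0 \<le>
         (Mu^2 * (x1 - x0) + 1 / ((3 - n1) * (4 - n1)) * mu powr (-(3 - n1)) * (x1 - x0))
         + chi1 / chi2 * (Mv^2 * (x1 - x0) + 1 / ((3 - n2) * (4 - n2)) * mv powr (-(3 - n2)) * (x1 - x0))"
        unfolding Fe_def using A B' by linarith
    qed
  qed
qed

end
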